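(* Consider an adaptive sampling algorithm and stopping rule. For a fixed arm $k \in [k^*]$ and a random time $\tau$, assume $N_k(\tau) \geq b$ almost surely for a constant $b\ge 3$. Then, for any $\delta \geq 1$, \[ \mathbb{P}\left(\frac{N_k(\tau)}{\log\log N_k(\tau)}\, D_{\psi^*_{\mu_k}}(\hat{\mu}_k(\tau) , \mu_k) \geq C_b \delta\right) \leq 2\exp\left\{-\delta\right\}, \] where $C_b := 4e\left(1 + \frac{1}{\log\log b}\right)$.
   Context: Stochastic multi-armed bandit with arms $P_1,\dots,P_{k^*}$ having means $\mu_k$; arms sampled adaptively ($A_t$ drawn from $\nu_t(\cdot\mid$ past data$)$, $Y_t\sim P_{A_t}$), $N_k(t)$ the number of draws of arm $k$ up to time $t$, $\hat\mu_k(t)$ its sample mean; $\tau$ is an arbitrary random time (not necessarily a stopping time). Arm $k$ is sub-$\psi$: $\log\mathbb{E}[e^{\lambda(Y-\mu_k)}]\le\psi(\lambda)$ for $\lambda\in\Lambda\ni 0$, with $\psi$ nonnegative, twice continuously differentiable, strictly convex, $\psi(0)=\psi'(0)=0$. $\psi_\mu^*$ is the convex conjugate of $\lambda\mapsto\lambda\mu+\psi(\lambda)$ and $D_{\psi_\mu^*}(\hat\mu,\mu)=\psi_\mu^*(\hat\mu)-\psi_\mu^*(\mu)-\psi_\mu^{*\prime}(\mu)(\hat\mu-\mu)$ is the associated Bregman divergence. *)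

theory Defs
  imports "HOL-Probability.Probability"
begin

definition num_pulls :: "(nat \<Rightarrow> 'm \<Rightarrow> nat) \<Rightarrow> nat \<Rightarrow> nat \<Rightarrow> 'm \<Rightarrow> nat" where
  "num_pulls A k t \<omega> = card {s \<in> {1..t}. A s \<omega> = k}"

definition sample_mean ::
  "(nat \<Rightarrow> 'm \<Rightarrow> nat) \<Rightarrow> (nat \<Rightarrow> 'm \<Rightarrow> real) \<Rightarrow> nat \<Rightarrow> nat \<Rightarrow> 'm \<Rightarrow> real" where
  "sample_mean A Y k t \<omega> =
     (\<Sum>s\<in>{s \<in> {1..t}. A s \<omega> = k}. Y s \<omega>) / real (num_pulls A k t \<omega>)"

definition strictly_convex_on :: "real set \<Rightarrow> (real \<Rightarrow> real) \<Rightarrow> bool" where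
  "strictly_convex_on S f \<longleftrightarrow>
     (\<forall>x\<in>S. \<forall>y\<in>S. \<forall>u::real. x \<noteq> y \<and> 0 < u \<and> u < 1 \<longrightarrow>
        f (u * x + (1 - u) * y) < u * f x + (1 - u) * f y)"

definition psi_conj :: "real set \<Rightarrow> (real \<Rightarrow> real) \<Rightarrow> real \<Rightarrow> real \<Rightarrow> ereal" where
  "psi_conj \<Lambda> \<psi> \<mu> x = (SUP l\<in>\<Lambda>. ereal (l * x - (l * \<mu> + \<psi> l)))"

definition psi_bregman :: "real set \<Rightarrow> (real \<Rightarrow> real) \<Rightarrow> real \<Rightarrow> real \<Rightarrow> real \<Rightarrow> ereal" where
  "psi_bregman \<Lambda> \<psi> \<mu> x y =
     psi_conj \<Lambda> \<psi> \<mu> x - psi_conj \<Lambda> \<psi> \<mu> y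
       - ereal (deriv (\<lambda>z. real_of_ereal (psi_conj \<Lambda> \<psi> \<mu> z)) y * (x - y))"

end

theory Submission
  imports Defs
begin


locale bandit = prob_space M for M :: "'m measure" +
  fixes F :: "nat \<Rightarrow> 'm measure" and k :: nat and P :: "nat \<Rightarrow> real measure"
    and A :: "nat \<Rightarrow> 'm \<Rightarrow> nat" and Y :: "nat \<Rightarrow> 'm \<Rightarrow> real"
  assumes F_sub: "\<And>t. subalgebra M (F t)"
    and F_mono: "\<And>s t. s \<le> t \<Longrightarrow> sets (F s) \<subseteq> sets (F t)"
    and Pk_prob: "prob_space (P k)"
    and Pk_sets: "sets (P k) = sets borel"
    and A_meas: "\<And>t. t \<ge> 1 \<Longrightarrow> A t \<in> measurable (F (t - 1)) (count_space UNIV)"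
    and Y_meas: "\<And>t. t \<ge> 1 \<Longrightarrow> Y t \<in> borel_measurable (F t)"
    and Y_law: "\<And>t B. t \<ge> 1 \<Longrightarrow> B \<in> sets borel \<Longrightarrow>
        AE \<omega> in M. real_cond_exp M (F (t - 1)) (\<lambda>\<omega>'. indicator B (Y t \<omega>')) \<omega>
                     = measure (P (A t \<omega>)) B"
begin

lemma Pk_fin: "finite_measure (P k)"
  using Pk_prob by (simp add: prob_space_def)

lemma space_F[simp]: "space (F t) = space M"
  using F_sub[of t] by (simp add: subalgebra_def)

lemma sets_F_M: "X \<in> sets (F t) \<Longrightarrow> X \<in> sets M"
  using F_sub[of t] by (auto simp add: subalgebra_def)

lemma subalg_FF: "s \<le> t \<Longrightarrow> subalgebra (F t) (F s)"
  using F_mono[of s t] by (simp add: subalgebra_def)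

lemma meas_FF: "s \<le> t \<Longrightarrow> f \<in> measurable (F s) N \<Longrightarrow> f \<in> measurable (F t) N"
  using measurable_from_subalg subalg_FF by blast

lemma meas_FM: "f \<in> measurable (F s) N \<Longrightarrow> f \<in> measurable M N"
  using measurable_from_subalg F_sub by blast

lemma A_set_F: "1 \<le> s \<Longrightarrow> s \<le> Suc t \<Longrightarrow> {\<omega> \<in> space M. A s \<omega> = j} \<in> sets (F t)"
proof -
  assume "1 \<le> s" "s \<le> Suc t"
  then have "A s \<in> measurable (F t) (count_space UNIV)"
  proof -
    have "s - 1 \<le> t" using \<open>s \<le> Suc t\<close> by simp
    then show ?thesis using A_meas[OF \<open>1 \<le> s\<close>] meas_FF by blast
  qed
  then have "A s -` {j} \<inter> space (F t) \<in> sets (F t)" by (rule measurable_sets) simp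
  then show ?thesis by (simp add: vimage_def Int_def conj_commute)
qed

lemma Y_meas_F: "1 \<le> s \<Longrightarrow> s \<le> t \<Longrightarrow> Y s \<in> borel_measurable (F t)"
  using Y_meas meas_FF by blast

lemma H_lemma:
  assumes H: "H \<in> sets (F t)" and HA: "H \<subseteq> {\<omega>. A (Suc t) \<omega> = k}" and B: "B \<in> sets borel"
  shows "emeasure M (H \<inter> (Y (Suc t) -` B)) = emeasure M H * emeasure (P k) B"
proof -
  have sfs: "sigma_finite_subalgebra M (F t)"
    by (rule finite_measure_subalgebra_is_sigma_finite)
       (simp add: finite_measure_subalgebra_def finite_measure_subalgebra_axioms_def F_sub finite_measure_axioms)
  have HM: "H \<in> sets M" using H sets_F_M by blast
  have Ym: "Y (Suc t) \<in> borel_measurable M" using Y_meas[of "Suc t"] meas_FM by auto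
  define g where "g = (\<lambda>\<omega>. indicator B (Y (Suc t) \<omega>) :: real)"
  have gm: "g \<in> borel_measurable M" unfolding g_def using measurable_compose[OF Ym borel_measurable_indicator[OF B]] .
  have gi: "integrable M g"
    by (rule integrable_const_bound[where B=1]) (simp add: g_def indicator_def, rule gm)
  have "(\<integral> x \<in> H. g x \<partial>M) = (\<integral>x \<in> H. real_cond_exp M (F t) g x \<partial>M)"
    using sigma_finite_subalgebra.real_cond_exp_intA[OF sfs gi H] .
  also have "\<dots> = (\<integral>x \<in> H. measure (P k) B \<partial>M)"
  proof (rule set_lebesgue_integral_cong_AE)
    show "H \<in> sets M" by fact
    show "real_cond_exp M (F t) g \<in> borel_measurable M"
      using borel_measurable_cond_exp2 by blast
    show "(\<lambda>x. measure (P k) B) \<in> borel_measurable M" by simp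
    have "AE \<omega> in M. real_cond_exp M (F t) g \<omega> = measure (P (A (Suc t) \<omega>)) B"
      using Y_law[of "Suc t" B] B by (simp add: g_def)
    then show "AE x\<in>H in M. real_cond_exp M (F t) g x = measure (P k) B"
      by eventually_elim (use HA in auto)
  qed
  also have "\<dots> = measure M H * measure (P k) B"
    using HM by (simp add: set_integral_const emeasure_eq_measure)
  finally have eq: "(\<integral> x \<in> H. g x \<partial>M) = measure M H * measure (P k) B" .
  have "(\<integral> x \<in> H. g x \<partial>M) = (\<integral> x. indicator (H \<inter> (Y (Suc t) -` B)) x \<partial>M)"
    unfolding set_lebesgue_integral_def g_def
    by (rule Bochner_Integration.integral_cong) (auto simp: indicator_def)
  also have "\<dots> = measure M (H \<inter> (Y (Suc t) -` B))"
    using HM sets.sets_into_space by (auto simp: Int_absorb2 intro!: arg_cong[where f="measure M"])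
  finally have "measure M (H \<inter> (Y (Suc t) -` B)) = measure M H * measure (P k) B"
    using eq by simp
  moreover have "H \<inter> (Y (Suc t) -` B) \<in> sets M"
  proof -
    have "H \<inter> (Y (Suc t) -` B \<inter> space M) \<in> sets M" using HM Ym B by measurable
    moreover have "H \<inter> (Y (Suc t) -` B \<inter> space M) = H \<inter> (Y (Suc t) -` B)"
      using HM sets.sets_into_space by auto
    ultimately show ?thesis by simp
  qed
  ultimately show ?thesis
    using finite_measure.emeasure_eq_measure[OF Pk_fin] HM
    by (simp add: emeasure_eq_measure ennreal_mult)
qed

lemma indep_nn:
  fixes X :: "'m \<Rightarrow> ennreal" and f :: "real \<Rightarrow> ennreal"
  assumes G: "G \<in> sets (F t)" and GA: "G \<subseteq> {\<omega>. A (Suc t) \<omega> = k}"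
    and X: "X \<in> borel_measurable (F t)" and f: "f \<in> borel_measurable borel"
  shows "(\<integral>\<^sup>+\<omega>. indicator G \<omega> * (X \<omega> * f (Y (Suc t) \<omega>)) \<partial>M)
       = (\<integral>\<^sup>+\<omega>. indicator G \<omega> * X \<omega> \<partial>M) * (\<integral>\<^sup>+y. f y \<partial>P k)"
proof -
  have GM: "G \<in> sets M" using G sets_F_M by blast
  have XM: "X \<in> borel_measurable M" using X meas_FM by blast
  have Ym: "Y (Suc t) \<in> borel_measurable M" using Y_meas[of "Suc t"] meas_FM by auto
  define MG where "MG = density M (indicator G)"
  have sMG[simp]: "sets MG = sets M" "space MG = space M" by (simp_all add: MG_def)
  have XMG: "X \<in> borel_measurable MG" using XM by (simp add: measurable_cong_sets[OF sMG(1) refl])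
  have pm: "(\<lambda>\<omega>. (X \<omega>, Y (Suc t) \<omega>)) \<in> measurable MG (borel \<Otimes>\<^sub>M borel)"
    using measurable_Pair[OF XM Ym] by (simp add: measurable_cong_sets[OF sMG(1) refl])
  define M1 where "M1 = distr MG borel X"
  define Q where "Q = distr MG (borel \<Otimes>\<^sub>M borel) (\<lambda>\<omega>. (X \<omega>, Y (Suc t) \<omega>))"
  have sM1[simp]: "sets M1 = sets borel" "space M1 = space borel" by (simp_all add: M1_def)
  have em1: "emeasure M1 C = emeasure M (G \<inter> (X -` C \<inter> space M))" if C: "C \<in> sets borel" for C
  proof -
    have "emeasure M1 C = emeasure MG (X -` C \<inter> space MG)"
      unfolding M1_def using XMG C by (simp add: emeasure_distr)
    also have "\<dots> = emeasure M (G \<inter> (X -` C \<inter> space M))"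
      unfolding MG_def using GM measurable_sets[OF XM C] by (simp add: emeasure_restricted)
    finally show ?thesis .
  qed
  have sf1: "sigma_finite_measure M1"
  proof -
    have "emeasure M1 (space M1) \<noteq> \<infinity>"
      using em1[of UNIV] by (simp add: emeasure_eq_measure)
    then have "finite_measure M1" by (rule finite_measureI)
    then show ?thesis by (simp add: finite_measure_def)
  qed
  have sf2: "sigma_finite_measure (P k)" using Pk_fin by (simp add: finite_measure_def)
  have sQ: "sets Q = sets (borel \<Otimes>\<^sub>M borel)" by (simp add: Q_def)
  have sP: "sets (M1 \<Otimes>\<^sub>M P k) = sets (borel \<Otimes>\<^sub>M (borel :: real measure))"
    by (rule sets_pair_measure_cong) (simp_all add: Pk_sets)
  have eqQ: "M1 \<Otimes>\<^sub>M P k = Q"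
  proof (rule pair_measure_eqI[OF sf1 sf2])
    show "sets (M1 \<Otimes>\<^sub>M P k) = sets Q" using sP sQ by simp
    fix C B assume C: "C \<in> sets M1" and B: "B \<in> sets (P k)"
    then have C': "C \<in> sets borel" and B': "B \<in> sets borel" using Pk_sets by auto
    define H where "H = G \<inter> (X -` C \<inter> space M)"
    have HF: "H \<in> sets (F t)"
    proof -
      have "X -` C \<inter> space (F t) \<in> sets (F t)" using X C' by (rule measurable_sets)
      then show ?thesis using G by (simp add: H_def)
    qed
    have HA: "H \<subseteq> {\<omega>. A (Suc t) \<omega> = k}" using GA by (auto simp: H_def)
    have "C \<times> B \<in> sets (borel \<Otimes>\<^sub>M borel)" using C' B' by simp
    then have "emeasure Q (C \<times> B) = emeasure MG ((\<lambda>\<omega>. (X \<omega>, Y (Suc t) \<omega>)) -` (C \<times> B) \<inter> space MG)"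
      unfolding Q_def using pm by (simp add: emeasure_distr)
    also have "\<dots> = emeasure M (G \<inter> ((\<lambda>\<omega>. (X \<omega>, Y (Suc t) \<omega>)) -` (C \<times> B) \<inter> space M))"
      using GM measurable_sets[OF pm \<open>C \<times> B \<in> sets (borel \<Otimes>\<^sub>M borel)\<close>]
      unfolding MG_def by (simp add: emeasure_restricted)
    also have "G \<inter> ((\<lambda>\<omega>. (X \<omega>, Y (Suc t) \<omega>)) -` (C \<times> B) \<inter> space M) = H \<inter> (Y (Suc t) -` B)"
      by (auto simp: H_def)
    also have "emeasure M \<dots> = emeasure M H * emeasure (P k) B"
      using H_lemma[OF HF HA B'] .
    finally show "emeasure M1 C * emeasure (P k) B = emeasure Q (C \<times> B)"
      using em1[OF C'] by (simp add: H_def)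
  qed
  have fm: "(\<lambda>p. fst p * f (snd p)) \<in> borel_measurable (borel \<Otimes>\<^sub>M borel)"
    using f by measurable
  have "(\<integral>\<^sup>+\<omega>. indicator G \<omega> * (X \<omega> * f (Y (Suc t) \<omega>)) \<partial>M)
      = (\<integral>\<^sup>+\<omega>. X \<omega> * f (Y (Suc t) \<omega>) \<partial>MG)"
    unfolding MG_def using GM XM Ym f by (subst nn_integral_density) auto
  also have "\<dots> = (\<integral>\<^sup>+p. fst p * f (snd p) \<partial>Q)"
    unfolding Q_def using pm fm by (subst nn_integral_distr) auto
  also have "\<dots> = (\<integral>\<^sup>+p. fst p * f (snd p) \<partial>(M1 \<Otimes>\<^sub>M P k))"
    using eqQ by simp
  also have "\<dots> = (\<integral>\<^sup>+x. \<integral>\<^sup>+y. x * f y \<partial>P k \<partial>M1)"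
    using sigma_finite_measure.nn_integral_fst[OF sf2, of "\<lambda>p. fst p * f (snd p)" M1] fm
    by (simp add: measurable_cong_sets[OF sP refl])
  also have "\<dots> = (\<integral>\<^sup>+x. x * (\<integral>\<^sup>+y. f y \<partial>P k) \<partial>M1)"
    using f by (subst nn_integral_cmult) (auto simp: measurable_cong_sets[OF Pk_sets refl])
  also have "\<dots> = (\<integral>\<^sup>+x. x \<partial>M1) * (\<integral>\<^sup>+y. f y \<partial>P k)"
    by (subst nn_integral_multc) (auto simp: measurable_cong_sets[OF sM1(1) refl])
  also have "(\<integral>\<^sup>+x. x \<partial>M1) = (\<integral>\<^sup>+\<omega>. X \<omega> \<partial>MG)"
    unfolding M1_def using XMG by (subst nn_integral_distr) auto
  also have "\<dots> = (\<integral>\<^sup>+\<omega>. indicator G \<omega> * X \<omega> \<partial>M)"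
    unfolding MG_def using GM XM by (subst nn_integral_density) auto
  finally show ?thesis .
qed

end


definition Phi :: "real set \<Rightarrow> (real \<Rightarrow> real) \<Rightarrow> real \<Rightarrow> ereal" where
  "Phi \<Lambda> \<psi> w = (SUP l\<in>\<Lambda>. ereal (l * w - \<psi> l))"

lemma psi_conj_Phi: "psi_conj \<Lambda> \<psi> \<mu> x = Phi \<Lambda> \<psi> (x - \<mu>)"
  unfolding psi_conj_def Phi_def by (intro SUP_cong refl) (simp add: algebra_simps)

locale psi_setup =
  fixes \<Lambda> :: "real set" and \<psi> :: "real \<Rightarrow> real"
  assumes L0: "0 \<in> \<Lambda>" and Lopen: "open \<Lambda>" and Lint: "is_interval \<Lambda>"
    and psi0: "\<psi> 0 = 0" and psi_nonneg: "\<And>l. l \<in> \<Lambda> \<Longrightarrow> \<psi> l \<ge> 0"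
    and conv: "strictly_convex_on \<Lambda> \<psi>"
begin

lemma Phi_ge: "l \<in> \<Lambda> \<Longrightarrow> ereal (l * w - \<psi> l) \<le> Phi \<Lambda> \<psi> w"
  unfolding Phi_def by (rule SUP_upper)

lemma Phi_nonneg: "Phi \<Lambda> \<psi> w \<ge> 0"
  using Phi_ge[OF L0, of w] by (simp add: psi0 zero_ereal_def)

lemma Phi_0: "Phi \<Lambda> \<psi> 0 = 0"
proof (rule antisym)
  show "Phi \<Lambda> \<psi> 0 \<le> 0" unfolding Phi_def
    by (rule SUP_least) (simp add: psi_nonneg)
qed (rule Phi_nonneg)

lemma Phi_gt: "Phi \<Lambda> \<psi> w > ereal c \<Longrightarrow> \<exists>l\<in>\<Lambda>. l * w - \<psi> l > c"
  unfolding Phi_def by (subst (asm) less_SUP_iff) auto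

lemma Phi_gt_sign:
  assumes "Phi \<Lambda> \<psi> w > ereal c" "c \<ge> 0" "\<sigma> * \<sigma> = 1" "\<sigma> * w > 0"
  shows "\<exists>l\<in>\<Lambda>. l * w - \<psi> l > c \<and> \<sigma> * l \<ge> 0"
proof -
  obtain l where l: "l \<in> \<Lambda>" "l * w - \<psi> l > c" using Phi_gt[OF assms(1)] by auto
  have "\<sigma> * l \<ge> 0"
  proof (rule ccontr)
    assume "\<not> \<sigma> * l \<ge> 0"
    then have "(\<sigma> * l) * (\<sigma> * w) < 0" using assms(4) by (simp add: mult_neg_pos)
    moreover have "(\<sigma> * l) * (\<sigma> * w) = (\<sigma> * \<sigma>) * (l * w)" by (simp add: algebra_simps)
    then have "(\<sigma> * l) * (\<sigma> * w) = l * w" using assms(3) by simp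
    ultimately show False using l psi_nonneg[OF l(1)] assms(2) by linarith
  qed
  then show ?thesis using l by auto
qed

lemma Phi_mono_sign:
  assumes "Phi \<Lambda> \<psi> w0 > ereal c" "c \<ge> 0" "\<sigma> * \<sigma> = 1" "\<sigma> * w0 > 0" "\<sigma> * w1 \<ge> \<sigma> * w0"
  shows "Phi \<Lambda> \<psi> w1 > ereal c"
proof -
  obtain l where l: "l \<in> \<Lambda>" "l * w0 - \<psi> l > c" "\<sigma> * l \<ge> 0" using Phi_gt_sign[OF assms(1-4)] by auto
  have "(\<sigma> * l) * (\<sigma> * w1 - \<sigma> * w0) \<ge> 0" using l(3) assms(5) by simp
  moreover have "(\<sigma> * l) * (\<sigma> * w1 - \<sigma> * w0) = (\<sigma> * \<sigma>) * (l * w1 - l * w0)"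
    by (simp add: algebra_simps)
  then have "(\<sigma> * l) * (\<sigma> * w1 - \<sigma> * w0) = l * w1 - l * w0" using assms(3) by simp
  ultimately have "l * w1 - \<psi> l > c" using l by linarith
  then have "ereal c < ereal (l * w1 - \<psi> l)" by simp
  also have "\<dots> \<le> Phi \<Lambda> \<psi> w1" by (rule Phi_ge[OF l(1)])
  finally show ?thesis .
qed

lemma psi_pos: "l \<in> \<Lambda> \<Longrightarrow> l \<noteq> 0 \<Longrightarrow> \<psi> l > 0"
proof (rule ccontr)
  assume l: "l \<in> \<Lambda>" "l \<noteq> 0" "\<not> \<psi> l > 0"
  then have "\<psi> l = 0" using psi_nonneg by force
  have "\<psi> ((1/2) * l + (1 - 1/2) * 0) < (1/2) * \<psi> l + (1 - 1/2) * \<psi> 0"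
    using conv[unfolded strictly_convex_on_def, rule_format, of l 0 "1/2"] l L0 by simp
  moreover have "l / 2 \<in> \<Lambda>"
  proof -
    have "l/2 \<in> closed_segment 0 l" unfolding closed_segment_def by (auto intro!: exI[of _ "1/2"])
    then show ?thesis using Lint L0 l(1)
      by (meson is_interval_convex convex_contains_segment subsetD)
  qed
  ultimately show False using psi_nonneg[of "l/2"] \<open>\<psi> l = 0\<close> psi0 by simp
qed

lemma psi_lin_lower:
  assumes e: "e > 0" "e \<in> \<Lambda>" and l: "l \<in> \<Lambda>" "l > e"
  shows "\<psi> l \<ge> l * \<psi> e / e"
proof -
  define u where "u = e / l"
  have u: "0 < u" "u < 1" using e l by (auto simp: u_def)
  have "\<psi> (u * l + (1 - u) * 0) < u * \<psi> l + (1 - u) * \<psi> 0"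
    using conv[unfolded strictly_convex_on_def, rule_format, of l 0 u] l L0 u e by simp
  then have "\<psi> e < (e / l) * \<psi> l" using e l by (simp add: u_def psi0)
  then have "\<psi> e * l < e * \<psi> l" using e l by (simp add: field_simps)
  then show ?thesis using e by (simp add: field_simps)
qed

lemma psi_lin_lower_neg:
  assumes e: "e > 0" "-e \<in> \<Lambda>" and l: "l \<in> \<Lambda>" "l < -e"
  shows "\<psi> l \<ge> (-l) * \<psi> (-e) / e"
proof -
  define u where "u = (-e) / l"
  have u: "0 < u" "u < 1" using e l by (auto simp: u_def field_simps)
  have "\<psi> (u * l + (1 - u) * 0) < u * \<psi> l + (1 - u) * \<psi> 0"
    using conv[unfolded strictly_convex_on_def, rule_format, of l 0 u] l L0 u e by simp
  then have "\<psi> (-e) < ((-e) / l) * \<psi> l" using e l by (simp add: u_def psi0)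
  then have "\<psi> (-e) * (-l) < e * \<psi> l" using e l by (simp add: field_simps)
  then show ?thesis using e by (simp add: field_simps)
qed

lemma small_bound:
  assumes eps: "\<epsilon> > 0"
  shows "\<exists>d>0. \<forall>w. \<bar>w\<bar> < d \<longrightarrow> Phi \<Lambda> \<psi> w \<le> ereal (\<epsilon> * \<bar>w\<bar>)"
proof -
  obtain r where r: "r > 0" "ball 0 r \<subseteq> \<Lambda>" using Lopen L0 openE by blast
  define e where "e = min \<epsilon> (r / 2)"
  have e: "e > 0" "e \<le> \<epsilon>" using eps r by (auto simp: e_def)
  have eL: "e \<in> \<Lambda>" "-e \<in> \<Lambda>" using r e by (auto simp: e_def dist_real_def intro!: subsetD[OF r(2)])
  define m where "m = min (\<psi> e) (\<psi> (-e))"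
  have m: "m > 0" using psi_pos[OF eL(1)] psi_pos[OF eL(2)] e by (auto simp: m_def)
  have "\<forall>w. \<bar>w\<bar> < m / e \<longrightarrow> Phi \<Lambda> \<psi> w \<le> ereal (\<epsilon> * \<bar>w\<bar>)"
  proof (intro allI impI)
    fix w assume w: "\<bar>w\<bar> < m / e"
    show "Phi \<Lambda> \<psi> w \<le> ereal (\<epsilon> * \<bar>w\<bar>)"
      unfolding Phi_def
    proof (rule SUP_least)
      fix l assume l: "l \<in> \<Lambda>"
      have "l * w - \<psi> l \<le> \<epsilon> * \<bar>w\<bar>"
      proof (cases "\<bar>l\<bar> \<le> e")
        case True
        have "l * w \<le> \<bar>l\<bar> * \<bar>w\<bar>" by (metis abs_ge_self abs_mult)
        also have "\<dots> \<le> \<epsilon> * \<bar>w\<bar>" using True e by (intro mult_right_mono) auto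
        finally show ?thesis using psi_nonneg[OF l] by linarith
      next
        case False
        have wm: "\<bar>w\<bar> * e < m" using w e by (simp add: field_simps)
        show ?thesis
        proof (cases "l > e")
          case True
          have "\<psi> l \<ge> l * \<psi> e / e" by (rule psi_lin_lower[OF e(1) eL(1) l True])
          moreover have "l * \<psi> e / e \<ge> l * m / e" using True e m by (intro divide_right_mono mult_left_mono) (auto simp: m_def)
          moreover have "l * w \<le> l * \<bar>w\<bar>" using True e by (intro mult_left_mono) auto
          moreover have "l * \<bar>w\<bar> \<le> l * m / e"
          proof -
            have "l * (\<bar>w\<bar> * e) \<le> l * m" using wm True e by (intro mult_left_mono) auto
            then show ?thesis using e by (simp add: field_simps)
          qed
          ultimately show ?thesis using eps by (smt (verit) abs_ge_zero mult_nonneg_nonneg)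
        next
          case False2: False
          then have lneg: "l < -e" using False by auto
          have "\<psi> l \<ge> (-l) * \<psi> (-e) / e" by (rule psi_lin_lower_neg[OF e(1) eL(2) l lneg])
          moreover have "(-l) * \<psi> (-e) / e \<ge> (-l) * m / e" using lneg e m by (intro divide_right_mono mult_left_mono) (auto simp: m_def)
          moreover have "l * w \<le> (-l) * \<bar>w\<bar>"
          proof -
            have "l * w \<le> \<bar>l * w\<bar>" by simp
            also have "\<bar>l * w\<bar> = (-l) * \<bar>w\<bar>" using lneg e by (simp add: abs_mult)
            finally show ?thesis .
          qed
          moreover have "(-l) * \<bar>w\<bar> \<le> (-l) * m / e"
          proof -
            have "(-l) * (\<bar>w\<bar> * e) \<le> (-l) * m" using wm lneg e by (intro mult_left_mono) auto
            then show ?thesis using e by (simp add: field_simps)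
          qed
          ultimately show ?thesis using eps by (smt (verit) abs_ge_zero mult_nonneg_nonneg)
        qed
      qed
      then show "ereal (l * w - \<psi> l) \<le> ereal (\<epsilon> * \<bar>w\<bar>)" by simp
    qed
  qed
  moreover have "m / e > 0" using m e by simp
  ultimately show ?thesis by blast
qed

lemma real_of_ereal_bound:
  assumes "0 \<le> X" "X \<le> ereal b"
  shows "0 \<le> real_of_ereal X \<and> real_of_ereal X \<le> b"
  using assms by (cases X) auto

lemma deriv_zero: "deriv (\<lambda>z. real_of_ereal (psi_conj \<Lambda> \<psi> \<mu> z)) \<mu> = 0"
proof (rule DERIV_imp_deriv)
  define f where "f = (\<lambda>z. real_of_ereal (psi_conj \<Lambda> \<psi> \<mu> z))"
  have f0: "f \<mu> = 0" by (simp add: f_def psi_conj_Phi Phi_0)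
  have "((\<lambda>z. (f z - f \<mu>) / (z - \<mu>)) \<longlongrightarrow> 0) (at \<mu>)"
  proof (rule tendstoI)
    fix \<epsilon> :: real assume eps: "\<epsilon> > 0"
    obtain d where d: "d > 0" "\<forall>w. \<bar>w\<bar> < d \<longrightarrow> Phi \<Lambda> \<psi> w \<le> ereal (\<epsilon> / 2 * \<bar>w\<bar>)"
      using small_bound[of "\<epsilon> / 2"] eps by auto
    show "\<forall>\<^sub>F z in at \<mu>. dist ((f z - f \<mu>) / (z - \<mu>)) 0 < \<epsilon>"
      unfolding eventually_at
    proof (intro exI[of _ d] conjI ballI impI allI)
      show "d > 0" by fact
      fix z assume z: "z \<noteq> \<mu> \<and> dist z \<mu> < d"
      have zz: "\<bar>z - \<mu>\<bar> < d" "\<bar>z - \<mu>\<bar> > 0" using z by (auto simp: dist_real_def)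
      have b: "0 \<le> f z \<and> f z \<le> \<epsilon> / 2 * \<bar>z - \<mu>\<bar>"
        unfolding f_def psi_conj_Phi using d(2) zz(1) Phi_nonneg by (intro real_of_ereal_bound) auto
      have "\<bar>f z / (z - \<mu>)\<bar> = f z / \<bar>z - \<mu>\<bar>" using b by (simp add: abs_divide)
      also have "\<dots> \<le> \<epsilon> / 2" using b zz by (simp add: divide_le_eq)
      also have "\<dots> < \<epsilon>" using eps by simp
      finally show "dist ((f z - f \<mu>) / (z - \<mu>)) 0 < \<epsilon>" using f0 by (simp add: dist_real_def)
    qed
  qed
  then show "(f has_real_derivative 0) (at \<mu>)" by (simp add: has_field_derivative_iff)
qed

lemma bregman_Phi: "psi_bregman \<Lambda> \<psi> \<mu> x \<mu> = Phi \<Lambda> \<psi> (x - \<mu>)"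
  unfolding psi_bregman_def deriv_zero by (simp add: psi_conj_Phi Phi_0 zero_ereal_def[symmetric])

end


context bandit
begin

definition Lsum :: "real \<Rightarrow> real \<Rightarrow> real \<Rightarrow> nat \<Rightarrow> 'm \<Rightarrow> real" where
  "Lsum \<mu> l p t \<omega> = (\<Sum>s\<in>{1..t}. if A s \<omega> = k then l * (Y s \<omega> - \<mu>) - p else 0)"

lemma Lsum_0[simp]: "Lsum \<mu> l p 0 \<omega> = 0"
  by (simp add: Lsum_def)

lemma Lsum_Suc: "Lsum \<mu> l p (Suc t) \<omega> = Lsum \<mu> l p t \<omega> + (if A (Suc t) \<omega> = k then l * (Y (Suc t) \<omega> - \<mu>) - p else 0)"
  by (simp add: Lsum_def)

lemma Lsum_meas: "s \<le> t \<Longrightarrow> Lsum \<mu> l p s \<in> borel_measurable (F t)"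
  unfolding Lsum_def
proof (intro borel_measurable_sum)
  fix i assume st: "s \<le> t" and i: "i \<in> {1..s}"
  have Aset: "{\<omega> \<in> space (F t). A i \<omega> = k} \<in> sets (F t)" using A_set_F[of i t k] st i by simp
  have Ym: "Y i \<in> borel_measurable (F t)" using Y_meas_F[of i t] st i by simp
  have "(\<lambda>\<omega>. l * (Y i \<omega> - \<mu>) - p) \<in> borel_measurable (F t)" using Ym by measurable
  then show "(\<lambda>\<omega>. if A i \<omega> = k then l * (Y i \<omega> - \<mu>) - p else 0) \<in> borel_measurable (F t)"
    using Aset by (intro measurable_If) auto
qed

lemma Lsum_measM: "Lsum \<mu> l p s \<in> borel_measurable M"
  using Lsum_meas[of s s] meas_FM by blast

lemma supermart:
  assumes int: "(\<integral>\<^sup>+y. ennreal (exp (l * (y - \<mu>) - p)) \<partial>P k) \<le> 1"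
    and G: "G \<in> sets (F t)"
  shows "(\<integral>\<^sup>+\<omega>. indicator G \<omega> * ennreal (exp (Lsum \<mu> l p (Suc t) \<omega>)) \<partial>M)
       \<le> (\<integral>\<^sup>+\<omega>. indicator G \<omega> * ennreal (exp (Lsum \<mu> l p t \<omega>)) \<partial>M)"
proof -
  define Z where "Z = (\<lambda>\<omega>. ennreal (exp (Lsum \<mu> l p t \<omega>)))"
  define g where "g = (\<lambda>y. ennreal (exp (l * (y - \<mu>) - p)))"
  define G2 where "G2 = G \<inter> {\<omega> \<in> space M. A (Suc t) \<omega> = k}"
  define G1 where "G1 = G - G2"
  have AF: "{\<omega> \<in> space M. A (Suc t) \<omega> = k} \<in> sets (F t)" using A_set_F[of "Suc t" t k] by simp
  have G2F: "G2 \<in> sets (F t)" using G AF by (simp add: G2_def)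
  have G1F: "G1 \<in> sets (F t)" using G G2F by (simp add: G1_def)
  have GM: "G \<subseteq> space M" using sets_F_M[OF G] sets.sets_into_space by blast
  have ZF: "Z \<in> borel_measurable (F t)" unfolding Z_def using Lsum_meas[of t t] by measurable
  have ZM: "Z \<in> borel_measurable M" using ZF meas_FM by blast
  have gm: "g \<in> borel_measurable borel" unfolding g_def by measurable
  have Ym: "Y (Suc t) \<in> borel_measurable M" using Y_meas[of "Suc t"] meas_FM by auto
  have pw: "indicator G \<omega> * ennreal (exp (Lsum \<mu> l p (Suc t) \<omega>))
      = indicator G1 \<omega> * Z \<omega> + indicator G2 \<omega> * (Z \<omega> * g (Y (Suc t) \<omega>))" for \<omega>
  proof (cases "\<omega> \<in> G")
    case True
    then have "\<omega> \<in> space M" using GM by auto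
    then show ?thesis using True
      by (auto simp: Lsum_Suc Z_def g_def G1_def G2_def exp_add ennreal_mult indicator_def)
  qed (simp add: G1_def G2_def indicator_def)
  have "(\<integral>\<^sup>+\<omega>. indicator G \<omega> * ennreal (exp (Lsum \<mu> l p (Suc t) \<omega>)) \<partial>M)
      = (\<integral>\<^sup>+\<omega>. indicator G1 \<omega> * Z \<omega> \<partial>M) + (\<integral>\<^sup>+\<omega>. indicator G2 \<omega> * (Z \<omega> * g (Y (Suc t) \<omega>)) \<partial>M)"
    unfolding pw using sets_F_M[OF G1F] sets_F_M[OF G2F] ZM gm Ym
    by (intro nn_integral_add) auto
  also have "(\<integral>\<^sup>+\<omega>. indicator G2 \<omega> * (Z \<omega> * g (Y (Suc t) \<omega>)) \<partial>M)
      = (\<integral>\<^sup>+\<omega>. indicator G2 \<omega> * Z \<omega> \<partial>M) * (\<integral>\<^sup>+y. g y \<partial>P k)"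
    by (rule indep_nn[OF G2F _ ZF gm]) (auto simp: G2_def)
  also have "\<dots> \<le> (\<integral>\<^sup>+\<omega>. indicator G2 \<omega> * Z \<omega> \<partial>M) * 1"
    using int unfolding g_def by (intro mult_left_mono) auto
  also have "(\<integral>\<^sup>+\<omega>. indicator G1 \<omega> * Z \<omega> \<partial>M) + (\<integral>\<^sup>+\<omega>. indicator G2 \<omega> * Z \<omega> \<partial>M) * 1
      = (\<integral>\<^sup>+\<omega>. indicator G1 \<omega> * Z \<omega> + indicator G2 \<omega> * Z \<omega> \<partial>M)"
    using sets_F_M[OF G1F] sets_F_M[OF G2F] ZM by (subst nn_integral_add) auto
  also have "\<dots> = (\<integral>\<^sup>+\<omega>. indicator G \<omega> * Z \<omega> \<partial>M)"
    by (intro nn_integral_cong) (auto simp: G1_def G2_def indicator_def)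
  finally show ?thesis by (simp add: Z_def add_mono)
qed

lemma supermart_iter:
  assumes int: "(\<integral>\<^sup>+y. ennreal (exp (l * (y - \<mu>) - p)) \<partial>P k) \<le> 1"
    and G: "G \<in> sets (F t)"
  shows "(\<integral>\<^sup>+\<omega>. indicator G \<omega> * ennreal (exp (Lsum \<mu> l p (t + m) \<omega>)) \<partial>M)
       \<le> (\<integral>\<^sup>+\<omega>. indicator G \<omega> * ennreal (exp (Lsum \<mu> l p t \<omega>)) \<partial>M)"
proof (induction m)
  case 0 then show ?case by simp
next
  case (Suc m)
  have "G \<in> sets (F (t + m))" using G F_mono[of t "t + m"] by auto
  from supermart[OF int this] Suc show ?case by simp
qed

fun Wst :: "real \<Rightarrow> real \<Rightarrow> real \<Rightarrow> real \<Rightarrow> nat \<Rightarrow> 'm \<Rightarrow> ennreal" where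
  "Wst \<mu> l p c 0 \<omega> = ennreal (exp (Lsum \<mu> l p 0 \<omega>))"
| "Wst \<mu> l p c (Suc t) \<omega> = (if (\<forall>s\<le>t. exp (Lsum \<mu> l p s \<omega>) < c)
     then ennreal (exp (Lsum \<mu> l p (Suc t) \<omega>)) else Wst \<mu> l p c t \<omega>)"

lemma R_F: "{\<omega>\<in>space M. \<forall>s\<le>t. exp (Lsum \<mu> l p s \<omega>) < c} \<in> sets (F t)"
proof -
  have "{\<omega>\<in>space (F t). \<forall>s. s \<le> t \<longrightarrow> exp (Lsum \<mu> l p s \<omega>) < c} \<in> sets (F t)"
  proof (rule sets.sets_Collect_countable_All)
    fix s
    show "{\<omega>\<in>space (F t). s \<le> t \<longrightarrow> exp (Lsum \<mu> l p s \<omega>) < c} \<in> sets (F t)"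
    proof (cases "s \<le> t")
      case True
      then have [measurable]: "Lsum \<mu> l p s \<in> borel_measurable (F t)" using Lsum_meas by simp
      have "{\<omega>\<in>space (F t). exp (Lsum \<mu> l p s \<omega>) < c} \<in> sets (F t)" by measurable
      then show ?thesis using True by simp
    next
      case False
      then have "{\<omega>\<in>space (F t). s \<le> t \<longrightarrow> exp (Lsum \<mu> l p s \<omega>) < c} = space (F t)" by auto
      then show ?thesis using sets.top[of "F t"] by simp
    qed
  qed
  then show ?thesis unfolding space_F .
qed

lemma Wst_eq: "(\<forall>s\<le>t. exp (Lsum \<mu> l p s \<omega>) < c) \<Longrightarrow> Wst \<mu> l p c t \<omega> = ennreal (exp (Lsum \<mu> l p t \<omega>))"
  by (cases t) auto

lemma Wst_meas: "Wst \<mu> l p c t \<in> borel_measurable M"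
proof (induction t)
  case 0
  then show ?case using Lsum_measM by simp
next
  case (Suc t)
  have [measurable]: "Lsum \<mu> l p (Suc t) \<in> borel_measurable M" by (rule Lsum_measM)
  have R: "{\<omega>\<in>space M. \<forall>s\<le>t. exp (Lsum \<mu> l p s \<omega>) < c} \<in> sets M" using R_F sets_F_M by blast
  show ?case unfolding Wst.simps
    by (rule measurable_If[OF _ Suc R]) measurable
qed

lemma Wst_ge: "\<omega> \<in> space M \<Longrightarrow> \<exists>t\<le>T. c \<le> exp (Lsum \<mu> l p t \<omega>) \<Longrightarrow> ennreal c \<le> Wst \<mu> l p c T \<omega>"
proof (induction T)
  case 0
  then show ?case by (auto intro: ennreal_leI)
next
  case (Suc T)
  show ?case
  proof (cases "\<forall>s\<le>T. exp (Lsum \<mu> l p s \<omega>) < c")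
    case True
    then have "c \<le> exp (Lsum \<mu> l p (Suc T) \<omega>)" using Suc.prems
      by (metis le_Suc_eq not_le)
    then show ?thesis using True by (auto intro: ennreal_leI)
  next
    case False
    then have "\<exists>t\<le>T. c \<le> exp (Lsum \<mu> l p t \<omega>)" by (auto simp: not_less)
    have "Wst \<mu> l p c (Suc T) \<omega> = Wst \<mu> l p c T \<omega>" using False by (simp only: Wst.simps if_False)
    then show ?thesis using Suc.IH[OF Suc.prems(1) \<open>\<exists>t\<le>T. c \<le> exp (Lsum \<mu> l p t \<omega>)\<close>] by simp
  qed
qed

lemma Wst_decr:
  assumes int: "(\<integral>\<^sup>+y. ennreal (exp (l * (y - \<mu>) - p)) \<partial>P k) \<le> 1"
  shows "(\<integral>\<^sup>+\<omega>. Wst \<mu> l p c (Suc t) \<omega> \<partial>M) \<le> (\<integral>\<^sup>+\<omega>. Wst \<mu> l p c t \<omega> \<partial>M)"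
proof -
  define R where "R = {\<omega>\<in>space M. \<forall>s\<le>t. exp (Lsum \<mu> l p s \<omega>) < c}"
  have RF: "R \<in> sets (F t)" unfolding R_def by (rule R_F)
  have RM: "R \<in> sets M" using RF sets_F_M by blast
  have RC: "space M - R \<in> sets M" using RM by auto
  have Wm: "Wst \<mu> l p c t \<in> borel_measurable M" by (rule Wst_meas)
  have Zm: "(\<lambda>\<omega>. ennreal (exp (Lsum \<mu> l p (Suc t) \<omega>))) \<in> borel_measurable M"
    using Lsum_measM by measurable
  have Zm': "(\<lambda>\<omega>. ennreal (exp (Lsum \<mu> l p t \<omega>))) \<in> borel_measurable M"
    using Lsum_measM by measurable
  have "(\<integral>\<^sup>+\<omega>. Wst \<mu> l p c (Suc t) \<omega> \<partial>M)
      = (\<integral>\<^sup>+\<omega>. indicator R \<omega> * ennreal (exp (Lsum \<mu> l p (Suc t) \<omega>))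
              + indicator (space M - R) \<omega> * Wst \<mu> l p c t \<omega> \<partial>M)"
    by (intro nn_integral_cong) (auto simp: R_def indicator_def)
  also have "\<dots> = (\<integral>\<^sup>+\<omega>. indicator R \<omega> * ennreal (exp (Lsum \<mu> l p (Suc t) \<omega>)) \<partial>M)
              + (\<integral>\<^sup>+\<omega>. indicator (space M - R) \<omega> * Wst \<mu> l p c t \<omega> \<partial>M)"
    using RM RC Wm Zm by (intro nn_integral_add) auto
  also have "\<dots> \<le> (\<integral>\<^sup>+\<omega>. indicator R \<omega> * ennreal (exp (Lsum \<mu> l p t \<omega>)) \<partial>M)
              + (\<integral>\<^sup>+\<omega>. indicator (space M - R) \<omega> * Wst \<mu> l p c t \<omega> \<partial>M)"
    by (intro add_right_mono supermart[OF int RF])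
  also have "(\<integral>\<^sup>+\<omega>. indicator R \<omega> * ennreal (exp (Lsum \<mu> l p t \<omega>)) \<partial>M)
      = (\<integral>\<^sup>+\<omega>. indicator R \<omega> * Wst \<mu> l p c t \<omega> \<partial>M)"
    by (intro nn_integral_cong) (auto simp: R_def indicator_def Wst_eq)
  also have "(\<integral>\<^sup>+\<omega>. indicator R \<omega> * Wst \<mu> l p c t \<omega> \<partial>M)
              + (\<integral>\<^sup>+\<omega>. indicator (space M - R) \<omega> * Wst \<mu> l p c t \<omega> \<partial>M)
      = (\<integral>\<^sup>+\<omega>. indicator R \<omega> * Wst \<mu> l p c t \<omega> + indicator (space M - R) \<omega> * Wst \<mu> l p c t \<omega> \<partial>M)"
    using RM RC Wm by (intro nn_integral_add[symmetric]) auto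
  also have "\<dots> = (\<integral>\<^sup>+\<omega>. Wst \<mu> l p c t \<omega> \<partial>M)"
    using RM sets.sets_into_space by (intro nn_integral_cong) (auto simp: indicator_def)
  finally show ?thesis .
qed

lemma ville_fin:
  assumes int: "(\<integral>\<^sup>+y. ennreal (exp (l * (y - \<mu>) - p)) \<partial>P k) \<le> 1"
    and c: "c > 0"
  shows "emeasure M {\<omega>\<in>space M. \<exists>t\<le>T. c \<le> exp (Lsum \<mu> l p t \<omega>)} \<le> ennreal (1 / c)"
proof -
  define S where "S = {\<omega>\<in>space M. \<exists>t\<le>T. c \<le> exp (Lsum \<mu> l p t \<omega>)}"
  have SM: "S \<in> sets M"
  proof -
    have "S = (\<Union>t\<in>{..T}. {\<omega>\<in>space M. c \<le> exp (Lsum \<mu> l p t \<omega>)})" by (auto simp: S_def)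
    also have "\<dots> \<in> sets M"
    proof (intro sets.finite_UN)
      fix t
      have [measurable]: "Lsum \<mu> l p t \<in> borel_measurable M" by (rule Lsum_measM)
      show "{\<omega>\<in>space M. c \<le> exp (Lsum \<mu> l p t \<omega>)} \<in> sets M" by measurable
    qed auto
    finally show ?thesis .
  qed
  have W0: "(\<integral>\<^sup>+\<omega>. Wst \<mu> l p c T \<omega> \<partial>M) \<le> 1"
  proof (induction T)
    case 0
    then show ?case by (simp add: emeasure_space_1)
  next
    case (Suc T)
    then show ?case using Wst_decr[OF int, of c T] by (meson order_trans)
  qed
  have "ennreal c * emeasure M S = (\<integral>\<^sup>+\<omega>. ennreal c * indicator S \<omega> \<partial>M)"
    using SM by (simp add: nn_integral_cmult_indicator)
  also have "\<dots> \<le> (\<integral>\<^sup>+\<omega>. Wst \<mu> l p c T \<omega> \<partial>M)"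
    by (intro nn_integral_mono) (auto simp: S_def indicator_def intro!: Wst_ge)
  finally have le1: "ennreal c * emeasure M S \<le> 1" using W0 by simp
  define x where "x = prob S"
  have "ennreal (c * x) \<le> 1" using le1 c by (simp add: x_def emeasure_eq_measure ennreal_mult)
  then have "c * x \<le> 1" by (simp add: ennreal_le_1)
  then have "x \<le> 1 / c" using c by (simp add: field_simps)
  then show ?thesis by (simp add: x_def S_def emeasure_eq_measure ennreal_leI)
qed

lemma ville:
  assumes int: "(\<integral>\<^sup>+y. ennreal (exp (l * (y - \<mu>) - p)) \<partial>P k) \<le> 1"
  shows "prob {\<omega>\<in>space M. \<exists>t. r \<le> Lsum \<mu> l p t \<omega>} \<le> exp (- r)"
proof -
  define c where "c = exp r"
  have c: "c > 0" by (simp add: c_def)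
  define B where "B = (\<lambda>T. {\<omega>\<in>space M. \<exists>t\<le>T. c \<le> exp (Lsum \<mu> l p t \<omega>)})"
  have BM: "B T \<in> sets M" for T
  proof -
    have "B T = (\<Union>t\<in>{..T}. {\<omega>\<in>space M. c \<le> exp (Lsum \<mu> l p t \<omega>)})" by (auto simp: B_def)
    also have "\<dots> \<in> sets M"
    proof (intro sets.finite_UN)
      fix t
      have [measurable]: "Lsum \<mu> l p t \<in> borel_measurable M" by (rule Lsum_measM)
      show "{\<omega>\<in>space M. c \<le> exp (Lsum \<mu> l p t \<omega>)} \<in> sets M" by measurable
    qed auto
    finally show ?thesis .
  qed
  have inc: "incseq B" unfolding incseq_def B_def by (auto intro: order_trans)
  have U: "(\<Union>T. B T) = {\<omega>\<in>space M. \<exists>t. r \<le> Lsum \<mu> l p t \<omega>}"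
    by (auto simp: B_def c_def)
  have "emeasure M (\<Union>T. B T) = (SUP T. emeasure M (B T))"
  proof -
    have "range B \<subseteq> sets M" using BM by auto
    from SUP_emeasure_incseq[OF this inc] show ?thesis by simp
  qed
  also have "\<dots> \<le> ennreal (1 / c)"
    using ville_fin[OF int c] by (intro SUP_least) (simp add: B_def)
  finally have "emeasure M {\<omega>\<in>space M. \<exists>t. r \<le> Lsum \<mu> l p t \<omega>} \<le> ennreal (1 / c)" using U by simp
  then have "prob {\<omega>\<in>space M. \<exists>t. r \<le> Lsum \<mu> l p t \<omega>} \<le> 1 / c"
    using c by (simp add: emeasure_eq_measure)
  then show ?thesis by (simp add: c_def exp_minus field_simps)
qed

lemma int_bound:
  assumes I: "integrable (P k) (\<lambda>y. exp (l * (y - \<mu>)))"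
    and L: "ln (\<integral>y. exp (l * (y - \<mu>)) \<partial>P k) \<le> p"
  shows "(\<integral>\<^sup>+y. ennreal (exp (l * (y - \<mu>) - p)) \<partial>P k) \<le> 1"
proof -
  interpret Pk: prob_space "P k" by (rule Pk_prob)
  define E where "E = (\<integral>y. exp (l * (y - \<mu>)) \<partial>P k)"
  have "(\<integral>y. 0 \<partial>P k) < E"
    unfolding E_def by (rule Pk.integral_less_AE_space) (auto simp: I Pk.emeasure_space_1)
  then have Epos: "E > 0" by simp
  have "E = exp (ln E)" using Epos by simp
  also have "\<dots> \<le> exp p" using L by (simp add: E_def)
  finally have Ele: "E \<le> exp p" .
  have I2: "integrable (P k) (\<lambda>y. exp (l * (y - \<mu>)) * exp (- p))"
    using I by (rule integrable_mult_left)
  have "(\<integral>\<^sup>+y. ennreal (exp (l * (y - \<mu>) - p)) \<partial>P k)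
      = (\<integral>\<^sup>+y. ennreal (exp (l * (y - \<mu>)) * exp (- p)) \<partial>P k)"
    by (simp only: exp_diff exp_minus divide_inverse)
  also have "\<dots> = ennreal (\<integral>y. exp (l * (y - \<mu>)) * exp (- p) \<partial>P k)"
    using I2 by (intro nn_integral_eq_integral) auto
  also have "(\<integral>y. exp (l * (y - \<mu>)) * exp (- p) \<partial>P k) = E * exp (- p)"
    by (simp add: E_def)
  finally have eq: "(\<integral>\<^sup>+y. ennreal (exp (l * (y - \<mu>) - p)) \<partial>P k) = ennreal (E * exp (- p))" .
  have "E * exp (- p) \<le> 1" using Ele by (simp add: exp_minus field_simps)
  then show ?thesis unfolding eq by simp
qed

end


lemma (in prob_space) prob_UN_incseq_le:
  assumes "incseq B" "range B \<subseteq> events" "\<And>m. prob (B m) \<le> r"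
  shows "prob (\<Union>m. B m) \<le> r"
  using finite_Lim_measure_incseq[OF assms(2,1)] assms(3) by (intro LIMSEQ_le_const2) auto

context bandit
begin

lemma num_pulls_sum: "real (num_pulls A k t \<omega>) = (\<Sum>s\<in>{1..t}. if A s \<omega> = k then 1 else 0)"
proof -
  have "(\<Sum>s\<in>{1..t}. (if A s \<omega> = k then 1 else 0 :: real)) = (\<Sum>s\<in>{s\<in>{1..t}. A s \<omega> = k}. 1)"
    by (subst sum.inter_filter) auto
  then show ?thesis by (simp add: num_pulls_def)
qed

lemma Lsum_lin: "Lsum \<mu> l p t \<omega> = l * Lsum \<mu> 1 0 t \<omega> - p * real (num_pulls A k t \<omega>)"
  unfolding Lsum_def num_pulls_sum
  by (auto simp: sum_distrib_left sum_subtractf[symmetric] if_distrib algebra_simps intro!: sum.cong)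

lemma sample_mean_Lsum:
  assumes "num_pulls A k t \<omega> > 0"
  shows "sample_mean A Y k t \<omega> - \<mu> = Lsum \<mu> 1 0 t \<omega> / real (num_pulls A k t \<omega>)"
proof -
  have s: "(\<Sum>s\<in>{s \<in> {1..t}. A s \<omega> = k}. Y s \<omega>) = (\<Sum>s\<in>{1..t}. if A s \<omega> = k then Y s \<omega> else 0)"
    by (subst sum.inter_filter) auto
  have pt: "\<And>s. (if A s \<omega> = k then 1 * (Y s \<omega> - \<mu>) - 0 else 0)
      = (if A s \<omega> = k then Y s \<omega> else 0) - \<mu> * (if A s \<omega> = k then 1 else 0)" by simp
  define SY where "SY = (\<Sum>s\<in>{1..t}. if A s \<omega> = k then Y s \<omega> else 0)"
  define n where "n = real (num_pulls A k t \<omega>)"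
  have L: "Lsum \<mu> 1 0 t \<omega> = SY - \<mu> * n"
    unfolding Lsum_def num_pulls_sum pt sum_subtractf sum_distrib_left SY_def n_def by (rule refl)
  have npos: "n > 0" using assms by (simp add: n_def)
  have gen: "\<And>a n. (n::real) > 0 \<Longrightarrow> a / n - \<mu> = (a - \<mu> * n) / n" by (simp add: field_simps)
  have "sample_mean A Y k t \<omega> - \<mu> = SY / n - \<mu>"
    unfolding sample_mean_def s SY_def n_def by (rule refl)
  also have "\<dots> = (SY - \<mu> * n) / n" by (rule gen[OF npos])
  finally show ?thesis unfolding L n_def .
qed

lemma num_pulls_meas: "(\<lambda>\<omega>. real (num_pulls A k t \<omega>)) \<in> borel_measurable M"
  unfolding num_pulls_sum
proof (intro borel_measurable_sum)
  fix i assume i: "i \<in> {1..t}"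
  have Aset: "{\<omega> \<in> space M. A i \<omega> = k} \<in> sets M" using sets_F_M[OF A_set_F[of i i k]] i by simp
  show "(\<lambda>\<omega>. if A i \<omega> = k then 1 else 0 :: real) \<in> borel_measurable M"
    by (rule measurable_If[OF _ _ Aset]) auto
qed

definition nT :: "('m \<Rightarrow> nat) \<Rightarrow> 'm \<Rightarrow> real" where
  "nT \<tau> \<omega> = real (num_pulls A k (\<tau> \<omega>) \<omega>)"

definition ST :: "real \<Rightarrow> ('m \<Rightarrow> nat) \<Rightarrow> 'm \<Rightarrow> real" where
  "ST \<mu> \<tau> \<omega> = Lsum \<mu> 1 0 (\<tau> \<omega>) \<omega>"

lemma nT_meas: "\<tau> \<in> measurable M (count_space UNIV) \<Longrightarrow> nT \<tau> \<in> borel_measurable M"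
  unfolding nT_def
  by (rule measurable_compose_countable'[where f="\<lambda>t \<omega>. real (num_pulls A k t \<omega>)" and I=UNIV])
     (auto intro: num_pulls_meas)

lemma ST_meas: "\<tau> \<in> measurable M (count_space UNIV) \<Longrightarrow> ST \<mu> \<tau> \<in> borel_measurable M"
  unfolding ST_def
  by (rule measurable_compose_countable'[where f="\<lambda>t \<omega>. Lsum \<mu> 1 0 t \<omega>" and I=UNIV])
     (auto intro: Lsum_measM)

lemma F_bound:
  assumes psi: "psi_setup \<Lambda> \<psi>"
    and subint: "\<And>l. l \<in> \<Lambda> \<Longrightarrow> integrable (P k) (\<lambda>y. exp (l * (y - \<mu>)))"
    and sub: "\<And>l. l \<in> \<Lambda> \<Longrightarrow> ln (\<integral>y. exp (l * (y - \<mu>)) \<partial>P k) \<le> \<psi> l"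
    and \<tau>: "\<tau> \<in> measurable M (count_space UNIV)"
    and Nj: "Nj > 0" and cj: "cj > 0" and \<sigma>: "\<sigma> * \<sigma> = 1"
    and a: "a > 0" "Phi \<Lambda> \<psi> (\<sigma> * a) > ereal cj"
  shows "prob {\<omega>\<in>space M. Nj \<le> nT \<tau> \<omega> \<and> nT \<tau> \<omega> * a \<le> \<sigma> * ST \<mu> \<tau> \<omega>} \<le> exp (- (Nj * cj))"
proof -
  interpret psi_setup \<Lambda> \<psi> by fact
  have sa: "\<sigma> * (\<sigma> * a) = a" using \<sigma> by (simp add: mult.assoc[symmetric])
  obtain l where l: "l \<in> \<Lambda>" "l * (\<sigma> * a) - \<psi> l > cj" "\<sigma> * l \<ge> 0"
    using Phi_gt_sign[OF a(2) _ \<sigma>] cj a sa by auto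
  define V where "V = {\<omega>\<in>space M. \<exists>t. Nj * cj \<le> Lsum \<mu> l (\<psi> l) t \<omega>}"
  have Vle: "prob V \<le> exp (- (Nj * cj))"
    unfolding V_def by (rule ville[OF int_bound[OF subint[OF l(1)] sub[OF l(1)]]])
  have VM: "V \<in> sets M"
    unfolding V_def
  proof (rule sets.sets_Collect_countable_Ex)
    fix t
    have [measurable]: "Lsum \<mu> l (\<psi> l) t \<in> borel_measurable M" by (rule Lsum_measM)
    show "{\<omega> \<in> space M. Nj * cj \<le> Lsum \<mu> l (\<psi> l) t \<omega>} \<in> sets M" by measurable
  qed
  have "{\<omega>\<in>space M. Nj \<le> nT \<tau> \<omega> \<and> nT \<tau> \<omega> * a \<le> \<sigma> * ST \<mu> \<tau> \<omega>} \<subseteq> V"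
  proof safe
    fix \<omega> assume \<omega>: "\<omega> \<in> space M" "Nj \<le> nT \<tau> \<omega>" "nT \<tau> \<omega> * a \<le> \<sigma> * ST \<mu> \<tau> \<omega>"
    define n where "n = nT \<tau> \<omega>"
    define S where "S = ST \<mu> \<tau> \<omega>"
    have n: "n \<ge> Nj" "n > 0" using \<omega> Nj by (auto simp: n_def)
    have L: "Lsum \<mu> l (\<psi> l) (\<tau> \<omega>) \<omega> = l * S - \<psi> l * n"
      by (simp add: Lsum_lin[of \<mu> l "\<psi> l"] S_def n_def ST_def nT_def)
    have "(\<sigma> * l) * (\<sigma> * S) = (\<sigma> * \<sigma>) * (l * S)" by algebra
    then have "l * S = (\<sigma> * l) * (\<sigma> * S)" using \<sigma> by simp
    also have "\<dots> \<ge> (\<sigma> * l) * (n * a)" using l(3) \<omega>(3) by (intro mult_left_mono) (auto simp: n_def S_def)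
    finally have "l * S \<ge> (\<sigma> * l) * (n * a)" .
    moreover have "(\<sigma> * l) * (n * a) = n * (l * (\<sigma> * a))" by algebra
    moreover have "n * (l * (\<sigma> * a) - \<psi> l) = n * (l * (\<sigma> * a)) - \<psi> l * n" by algebra
    ultimately have "l * S - \<psi> l * n \<ge> n * (l * (\<sigma> * a) - \<psi> l)" by linarith
    moreover have "n * (l * (\<sigma> * a) - \<psi> l) \<ge> n * cj" using l(2) n by (intro mult_left_mono) auto
    moreover have "n * cj \<ge> Nj * cj" using n cj by (intro mult_right_mono) auto
    ultimately have "Nj * cj \<le> Lsum \<mu> l (\<psi> l) (\<tau> \<omega>) \<omega>" using L by linarith
    then show "\<omega> \<in> V" unfolding V_def using \<omega>(1) by blast
  qed
  then have "prob {\<omega>\<in>space M. Nj \<le> nT \<tau> \<omega> \<and> nT \<tau> \<omega> * a \<le> \<sigma> * ST \<mu> \<tau> \<omega>} \<le> prob V"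
    using VM by (intro finite_measure_mono)
  then show ?thesis using Vle by linarith
qed

lemma epoch_bound:
  assumes psi: "psi_setup \<Lambda> \<psi>"
    and subint: "\<And>l. l \<in> \<Lambda> \<Longrightarrow> integrable (P k) (\<lambda>y. exp (l * (y - \<mu>)))"
    and sub: "\<And>l. l \<in> \<Lambda> \<Longrightarrow> ln (\<integral>y. exp (l * (y - \<mu>)) \<partial>P k) \<le> \<psi> l"
    and \<tau>: "\<tau> \<in> measurable M (count_space UNIV)"
    and Nj: "Nj > 0" and cj: "cj > 0" and \<sigma>: "\<sigma> * \<sigma> = 1"
  shows "\<exists>K\<in>sets M. prob K \<le> exp (- (Nj * cj)) \<and>
    {\<omega>\<in>space M. Nj \<le> nT \<tau> \<omega> \<and> \<sigma> * (ST \<mu> \<tau> \<omega> / nT \<tau> \<omega>) > 0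
        \<and> Phi \<Lambda> \<psi> (ST \<mu> \<tau> \<omega> / nT \<tau> \<omega>) > ereal cj} \<subseteq> K"
proof -
  interpret psi_setup \<Lambda> \<psi> by fact
  define Ts where "Ts = {a. a > 0 \<and> Phi \<Lambda> \<psi> (\<sigma> * a) > ereal cj}"
  define Fa where "Fa = (\<lambda>a. {\<omega>\<in>space M. Nj \<le> nT \<tau> \<omega> \<and> nT \<tau> \<omega> * a \<le> \<sigma> * ST \<mu> \<tau> \<omega>})"
  define E where "E = {\<omega>\<in>space M. Nj \<le> nT \<tau> \<omega> \<and> \<sigma> * (ST \<mu> \<tau> \<omega> / nT \<tau> \<omega>) > 0
        \<and> Phi \<Lambda> \<psi> (ST \<mu> \<tau> \<omega> / nT \<tau> \<omega>) > ereal cj}"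
  have [measurable]: "nT \<tau> \<in> borel_measurable M" "ST \<mu> \<tau> \<in> borel_measurable M"
    using nT_meas[OF \<tau>] ST_meas[OF \<tau>] by auto
  have FaM: "Fa a \<in> sets M" for a unfolding Fa_def by measurable
  have Fab: "prob (Fa a) \<le> exp (- (Nj * cj))" if "a \<in> Ts" for a
    using that unfolding Fa_def Ts_def by (intro F_bound[OF psi subint sub \<tau> Nj cj \<sigma>]) auto
  have ss: "\<sigma> * (\<sigma> * x) = x" for x using \<sigma> by (simp add: mult.assoc[symmetric])
  have up: "a' \<in> Ts" if "a \<in> Ts" "a \<le> a'" for a a'
  proof -
    from that(1) have h: "a > 0" "Phi \<Lambda> \<psi> (\<sigma> * a) > ereal cj" by (auto simp: Ts_def)
    have "Phi \<Lambda> \<psi> (\<sigma> * a') > ereal cj"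
    proof (rule Phi_mono_sign[OF h(2) _ \<sigma>])
      show "0 \<le> cj" using cj by simp
      show "0 < \<sigma> * (\<sigma> * a)" unfolding ss using h by simp
      show "\<sigma> * (\<sigma> * a) \<le> \<sigma> * (\<sigma> * a')" unfolding ss using that by simp
    qed
    then show ?thesis using that by (auto simp: Ts_def)
  qed
  have anti: "Fa a' \<subseteq> Fa a" if "a \<le> a'" for a a'
  proof
    fix \<omega> assume "\<omega> \<in> Fa a'"
    then have "\<omega> \<in> space M" "Nj \<le> nT \<tau> \<omega>" "nT \<tau> \<omega> * a' \<le> \<sigma> * ST \<mu> \<tau> \<omega>" by (auto simp: Fa_def)
    moreover have "nT \<tau> \<omega> * a \<le> nT \<tau> \<omega> * a'" using that \<open>Nj \<le> nT \<tau> \<omega>\<close> Nj by (intro mult_left_mono) auto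
    ultimately show "\<omega> \<in> Fa a" by (auto simp: Fa_def)
  qed
  have memE: "\<sigma> * (ST \<mu> \<tau> \<omega> / nT \<tau> \<omega>) \<in> Ts \<and> \<omega> \<in> Fa (\<sigma> * (ST \<mu> \<tau> \<omega> / nT \<tau> \<omega>))" if "\<omega> \<in> E" for \<omega>
  proof -
    have \<omega>: "\<omega> \<in> space M" "Nj \<le> nT \<tau> \<omega>" "\<sigma> * (ST \<mu> \<tau> \<omega> / nT \<tau> \<omega>) > 0"
      "Phi \<Lambda> \<psi> (ST \<mu> \<tau> \<omega> / nT \<tau> \<omega>) > ereal cj" using that by (auto simp: E_def)
    have npos: "nT \<tau> \<omega> > 0" using \<omega>(2) Nj by linarith
    have "nT \<tau> \<omega> * (\<sigma> * (ST \<mu> \<tau> \<omega> / nT \<tau> \<omega>)) = \<sigma> * ST \<mu> \<tau> \<omega>" using npos by simp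
    moreover have "Phi \<Lambda> \<psi> (\<sigma> * (\<sigma> * (ST \<mu> \<tau> \<omega> / nT \<tau> \<omega>))) > ereal cj"
      unfolding ss using \<omega>(4) .
    ultimately show ?thesis using \<omega>(1-3) unfolding Ts_def Fa_def by auto
  qed
  show ?thesis
  proof (cases "Ts = {}")
    case True
    then have "E = {}" using memE by blast
    then show ?thesis unfolding E_def[symmetric] by (intro bexI[of _ "{}"]) auto
  next
    case False
    have bdd: "bdd_below Ts" by (rule bdd_belowI[of _ 0]) (auto simp: Ts_def)
    define a0 where "a0 = Inf Ts"
    have a0le: "a0 \<le> a" if "a \<in> Ts" for a using cInf_lower[OF that bdd] by (simp add: a0_def)
    show ?thesis
    proof (cases "a0 \<in> Ts")
      case True
      have "E \<subseteq> Fa a0"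
      proof
        fix \<omega> assume "\<omega> \<in> E"
        with memE[OF this] show "\<omega> \<in> Fa a0" using a0le anti by blast
      qed
      then show ?thesis using FaM Fab[OF True] unfolding E_def by blast
    next
      case notin: False
      define B where "B = (\<lambda>m::nat. Fa (a0 + 1 / (real m + 1)))"
      have inTs: "a0 + 1 / (real m + 1) \<in> Ts" for m
      proof -
        have "Inf Ts < a0 + 1 / (real m + 1)" by (simp add: a0_def)
        then obtain a' where "a' \<in> Ts" "a' < a0 + 1 / (real m + 1)"
          using cInf_less_iff[OF False bdd] by auto
        then show ?thesis using up[of a' "a0 + 1 / (real m + 1)"] by simp
      qed
      have BM: "range B \<subseteq> sets M" using FaM by (auto simp: B_def)
      have inc: "incseq B" unfolding incseq_def B_def
      proof (intro allI impI anti)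
        fix m n :: nat assume "m \<le> n"
        then show "a0 + 1 / (real n + 1) \<le> a0 + 1 / (real m + 1)"
          by (simp add: frac_le)
      qed
      have "prob (\<Union>m. B m) \<le> exp (- (Nj * cj))"
        using inc BM Fab[OF inTs] by (intro prob_UN_incseq_le) (auto simp: B_def)
      moreover have "E \<subseteq> (\<Union>m. B m)"
      proof
        fix \<omega> assume \<omega>: "\<omega> \<in> E"
        define a where "a = \<sigma> * (ST \<mu> \<tau> \<omega> / nT \<tau> \<omega>)"
        have aT: "a \<in> Ts" "\<omega> \<in> Fa a" using memE[OF \<omega>] by (auto simp: a_def)
        have "a > a0" using a0le[OF aT(1)] notin aT(1) by (cases "a = a0") auto
        then obtain m where m: "inverse (real (Suc m)) < a - a0" using reals_Archimedean[of "a - a0"] by auto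
        have le: "a0 + 1 / (real m + 1) \<le> a" using m by (simp add: inverse_eq_divide add.commute)
        have "\<omega> \<in> B m" using anti[OF le] aT(2) unfolding B_def by blast
        then show "\<omega> \<in> (\<Union>m. B m)" by blast
      qed
      moreover have "(\<Union>m. B m) \<in> sets M" using BM by auto
      ultimately show ?thesis unfolding E_def by blast
    qed
  qed
qed

end


lemma L_facts:
  fixes b :: real assumes b: "b \<ge> 3"
  shows "ln b > 1" "ln (ln b) > 0"
proof -
  have "exp 1 < b" using e_less_272 b by linarith
  then have "ln (exp 1) < ln b" using b by (subst ln_less_cancel_iff) auto
  then show 1: "ln b > 1" by simp
  then show "ln (ln b) > 0" by simp
qed

lemma sum_bound:
  fixes b \<delta> :: real assumes b: "b \<ge> 3" and \<delta>: "\<delta> \<ge> 1"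
  defines "L \<equiv> ln b"
  defines "q \<equiv> 2 * \<delta> * (1 + 1 / ln L)"
  shows "summable (\<lambda>j::nat. exp (- (q * ln (L + real j))))"
    and "(\<Sum>j. exp (- (q * ln (L + real j)))) \<le> 2 * exp (- (2 * \<delta>))"
proof -
  have L1: "L > 1" and lL: "ln L > 0" using L_facts[OF b] by (auto simp: L_def)
  have "2 * \<delta> * (1 + 1 / ln L) \<ge> 2 * \<delta> * 1" using \<delta> lL by (intro mult_left_mono) auto
  then have q2: "q \<ge> 2" using \<delta> unfolding q_def by linarith
  define g where "g = (\<lambda>j::nat. exp (- (q * ln (L + real j))))"
  define c where "c = exp ((2 - q) * ln L)"
  have gstep: "g (Suc n) \<le> c * (1 / (L + real n) - 1 / (L + real (Suc n)))" for n
  proof -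
    define x where "x = L + real (Suc n)"
    have x: "x > 1" "x \<ge> L" "x - 1 > 0" using L1 by (auto simp: x_def)
    have e1: "g (Suc n) = exp (- (q * ln x))" by (simp add: g_def x_def)
    have e2: "- (q * ln x) = (2 - q) * ln x + (- (2 * ln x))" by algebra
    have A: "g (Suc n) = exp ((2 - q) * ln x) * exp (- (2 * ln x))"
      unfolding e1 e2 exp_add by (rule refl)
    have B: "exp (- (2 * ln x)) = 1 / x^2"
    proof -
      have l2: "ln (x^2) = 2 * ln x" using ln_realpow[of x 2] by simp
      have x2: "x^2 > 0" using x by simp
      have "exp (2 * ln x) = x^2" unfolding l2[symmetric] using exp_ln[OF x2] .
      then show ?thesis unfolding exp_minus inverse_eq_divide by (rule arg_cong)
    qed
    have C: "exp ((2 - q) * ln x) \<le> c"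
      unfolding c_def exp_le_cancel_iff using q2 x L1 by (intro mult_left_mono_neg) auto
    have D: "1 / x^2 \<le> 1 / (x - 1) - 1 / x"
      using x by (simp add: field_simps power2_eq_square)
    have "g (Suc n) \<le> c * (1 / x^2)"
      unfolding A B by (rule mult_right_mono[OF C]) simp
    also have "\<dots> \<le> c * (1 / (x - 1) - 1 / x)"
      by (rule mult_left_mono[OF D]) (simp add: c_def)
    finally have "g (Suc n) \<le> c * (1 / (x - 1) - 1 / x)" .
    then show ?thesis by (simp add: x_def)
  qed
  have part: "(\<Sum>j<Suc n. g j) \<le> exp (- (q * ln L)) + c * (1 / L - 1 / (L + real n))" for n
  proof (induction n)
    case 0
    then show ?case by (simp add: g_def)
  next
    case (Suc n)
    have "(\<Sum>j<Suc (Suc n). g j) = (\<Sum>j<Suc n. g j) + g (Suc n)" by simp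
    also have "\<dots> \<le> exp (- (q * ln L)) + c * (1 / L - 1 / (L + real n))
                    + c * (1 / (L + real n) - 1 / (L + real (Suc n)))"
      using Suc gstep[of n] by linarith
    finally show ?case by (simp add: algebra_simps)
  qed
  have cpos: "c > 0" by (simp add: c_def)
  define B where "B = exp (- (q * ln L)) + c / L"
  have partB: "(\<Sum>j<n. g j) \<le> B" for n
  proof -
    have "(\<Sum>j<n. g j) \<le> (\<Sum>j<Suc n. g j)" by (simp add: g_def)
    also have "\<dots> \<le> exp (- (q * ln L)) + c * (1 / L - 1 / (L + real n))" by (rule part)
    also have "\<dots> \<le> B" unfolding B_def using cpos L1
      by (simp add: right_diff_distrib)
    finally show ?thesis .
  qed
  have sg: "summable g" by (rule summableI_nonneg_bounded[of g B]) (simp add: g_def, rule partB)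
  then show "summable (\<lambda>j::nat. exp (- (q * ln (L + real j))))" by (simp add: g_def)
  have "suminf g \<le> B" by (rule suminf_le_const[OF sg partB])
  also have "B \<le> 2 * exp (- (2 * \<delta>))"
  proof -
    have qL: "q * ln L = 2 * \<delta> * ln L + 2 * \<delta>" using lL by (simp add: q_def field_simps)
    have "exp (- (q * ln L)) \<le> exp (- (2 * \<delta>))" using qL lL \<delta> by simp
    moreover have "c / L = exp ((1 - q) * ln L)"
    proof -
      have "c / L = exp ((2 - q) * ln L - ln L)" unfolding c_def exp_diff using L1 by simp
      also have "(2 - q) * ln L - ln L = (1 - q) * ln L" by algebra
      finally show ?thesis .
    qed
    moreover have "exp ((1 - q) * ln L) \<le> exp (- (2 * \<delta>))"
    proof -
      have "(1 - q) * ln L = ln L * (1 - 2 * \<delta>) - 2 * \<delta>" using qL by (simp add: algebra_simps)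
      moreover have "ln L * (1 - 2 * \<delta>) \<le> 0" using lL \<delta> by (intro mult_nonneg_nonpos) auto
      ultimately show ?thesis by simp
    qed
    ultimately show ?thesis unfolding B_def by linarith
  qed
  finally show "(\<Sum>j. exp (- (q * ln (L + real j)))) \<le> 2 * exp (- (2 * \<delta>))" by (simp add: g_def)
qed



lemma ereal_mult_ge:
  assumes r: "r > 0" and h: "ereal r * X \<ge> ereal s"
  shows "X \<ge> ereal (s / r)"
proof (cases X)
  case (real x)
  then have "s \<le> r * x" using h by simp
  then show ?thesis using r real by (simp add: pos_divide_le_eq mult.commute)
next
  case PInf then show ?thesis by simp
next
  case MInf then show ?thesis using h r by simp
qed

context bandit
begin

lemma main:
  assumes psi: "psi_setup \<Lambda> \<psi>"
    and subint: "\<And>l. l \<in> \<Lambda> \<Longrightarrow> integrable (P k) (\<lambda>y. exp (l * (y - \<mu>)))"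
    and sub: "\<And>l. l \<in> \<Lambda> \<Longrightarrow> ln (\<integral>y. exp (l * (y - \<mu>)) \<partial>P k) \<le> \<psi> l"
    and \<tau>: "\<tau> \<in> measurable M (count_space UNIV)"
    and b: "b \<ge> 3" and Nb: "AE \<omega> in M. real (num_pulls A k (\<tau> \<omega>) \<omega>) \<ge> b" and \<delta>: "\<delta> \<ge> 1"
  shows "measure M {\<omega> \<in> space M.
            ereal (real (num_pulls A k (\<tau> \<omega>) \<omega>) / ln (ln (real (num_pulls A k (\<tau> \<omega>) \<omega>))))
              * psi_bregman \<Lambda> \<psi> \<mu> (sample_mean A Y k (\<tau> \<omega>) \<omega>) \<mu>
            \<ge> ereal (4 * exp 1 * (1 + 1 / ln (ln b)) * \<delta>)}
         \<le> 2 * exp (- \<delta>)"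
proof -
  interpret psi_setup \<Lambda> \<psi> by fact
  define L where "L = ln b"
  define q where "q = 2 * \<delta> * (1 + 1 / ln L)"
  define C where "C = 4 * exp 1 * (1 + 1 / ln (ln b))"
  define Nj where "Nj = (\<lambda>j::nat. b * exp (real j))"
  define cj where "cj = (\<lambda>j::nat. q * ln (L + real j) / Nj j)"
  define g where "g = (\<lambda>j::nat. exp (- (q * ln (L + real j))))"
  have L1: "L > 1" "ln L > 0" using L_facts[OF b] by (auto simp: L_def)
  have Njpos: "Nj j > 0" for j using b by (simp add: Nj_def)
  have lnNj: "ln (Nj j) = L + real j" for j using b by (simp add: Nj_def L_def ln_mult)
  have iL: "1 / ln L > 0" using L1 by simp
  have pL: "1 + 1 / ln L > 0" using iL by linarith
  then have qpos: "q > 0" unfolding q_def using \<delta> by simp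
  have lnLj: "ln (L + real j) > 0" for j using L1 by simp
  have cjpos: "cj j > 0" for j unfolding cj_def using qpos lnLj[of j] Njpos[of j] by simp
  have Ncj: "Nj j * cj j = q * ln (L + real j)" for j using Njpos[of j] by (simp add: cj_def)
  have Kex: "\<exists>K. K \<in> sets M \<and> prob K \<le> g j \<and>
     {\<omega>\<in>space M. Nj j \<le> nT \<tau> \<omega> \<and> \<sigma> * (ST \<mu> \<tau> \<omega> / nT \<tau> \<omega>) > 0
        \<and> Phi \<Lambda> \<psi> (ST \<mu> \<tau> \<omega> / nT \<tau> \<omega>) > ereal (cj j)} \<subseteq> K" if "\<sigma> * \<sigma> = 1" for j \<sigma>
    using epoch_bound[OF psi subint sub \<tau> Njpos cjpos that, of j j] unfolding Ncj g_def by blast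
  have "\<forall>j. \<exists>K. K \<in> sets M \<and> prob K \<le> g j \<and>
     {\<omega>\<in>space M. Nj j \<le> nT \<tau> \<omega> \<and> 1 * (ST \<mu> \<tau> \<omega> / nT \<tau> \<omega>) > 0
        \<and> Phi \<Lambda> \<psi> (ST \<mu> \<tau> \<omega> / nT \<tau> \<omega>) > ereal (cj j)} \<subseteq> K" using Kex[of 1] by simp
  then obtain Kp where Kp: "\<And>j. Kp j \<in> sets M \<and> prob (Kp j) \<le> g j \<and>
     {\<omega>\<in>space M. Nj j \<le> nT \<tau> \<omega> \<and> 1 * (ST \<mu> \<tau> \<omega> / nT \<tau> \<omega>) > 0
        \<and> Phi \<Lambda> \<psi> (ST \<mu> \<tau> \<omega> / nT \<tau> \<omega>) > ereal (cj j)} \<subseteq> Kp j"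
    using choice[of "\<lambda>j K. K \<in> sets M \<and> prob K \<le> g j \<and>
     {\<omega>\<in>space M. Nj j \<le> nT \<tau> \<omega> \<and> 1 * (ST \<mu> \<tau> \<omega> / nT \<tau> \<omega>) > 0
        \<and> Phi \<Lambda> \<psi> (ST \<mu> \<tau> \<omega> / nT \<tau> \<omega>) > ereal (cj j)} \<subseteq> K"] by blast
  have "\<forall>j. \<exists>K. K \<in> sets M \<and> prob K \<le> g j \<and>
     {\<omega>\<in>space M. Nj j \<le> nT \<tau> \<omega> \<and> (-1) * (ST \<mu> \<tau> \<omega> / nT \<tau> \<omega>) > 0
        \<and> Phi \<Lambda> \<psi> (ST \<mu> \<tau> \<omega> / nT \<tau> \<omega>) > ereal (cj j)} \<subseteq> K" using Kex[of "-1"] by simp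
  then obtain Km where Km: "\<And>j. Km j \<in> sets M \<and> prob (Km j) \<le> g j \<and>
     {\<omega>\<in>space M. Nj j \<le> nT \<tau> \<omega> \<and> (-1) * (ST \<mu> \<tau> \<omega> / nT \<tau> \<omega>) > 0
        \<and> Phi \<Lambda> \<psi> (ST \<mu> \<tau> \<omega> / nT \<tau> \<omega>) > ereal (cj j)} \<subseteq> Km j"
    using choice[of "\<lambda>j K. K \<in> sets M \<and> prob K \<le> g j \<and>
     {\<omega>\<in>space M. Nj j \<le> nT \<tau> \<omega> \<and> (-1) * (ST \<mu> \<tau> \<omega> / nT \<tau> \<omega>) > 0
        \<and> Phi \<Lambda> \<psi> (ST \<mu> \<tau> \<omega> / nT \<tau> \<omega>) > ereal (cj j)} \<subseteq> K"] by blast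
  define KK where "KK = (\<lambda>j. Kp j \<union> Km j)"
  have KKM: "KK j \<in> sets M" for j using Kp[of j] Km[of j] by (auto simp: KK_def)
  have KKle: "prob (KK j) \<le> 2 * g j" for j
  proof -
    have "prob (KK j) \<le> prob (Kp j) + prob (Km j)"
      unfolding KK_def using Kp[of j] Km[of j] by (intro measure_Un_le) auto
    then show ?thesis using Kp[of j] Km[of j] by linarith
  qed
  have [measurable]: "nT \<tau> \<in> borel_measurable M" using nT_meas[OF \<tau>] .
  define N0 where "N0 = {\<omega>\<in>space M. \<not> b \<le> nT \<tau> \<omega>}"
  have N0M: "N0 \<in> sets M" unfolding N0_def by measurable
  have N0null: "emeasure M N0 = 0"
    using AE_iff_measurable[OF N0M, of "\<lambda>\<omega>. b \<le> nT \<tau> \<omega>"] Nb by (simp add: N0_def nT_def)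
  define TS where "TS = {\<omega> \<in> space M.
            ereal (real (num_pulls A k (\<tau> \<omega>) \<omega>) / ln (ln (real (num_pulls A k (\<tau> \<omega>) \<omega>))))
              * psi_bregman \<Lambda> \<psi> \<mu> (sample_mean A Y k (\<tau> \<omega>) \<omega>) \<mu>
            \<ge> ereal (4 * exp 1 * (1 + 1 / ln (ln b)) * \<delta>)}"
  have cover: "TS \<subseteq> N0 \<union> (\<Union>j. KK j)"
  proof
    fix \<omega> assume \<omega>: "\<omega> \<in> TS"
    show "\<omega> \<in> N0 \<union> (\<Union>j. KK j)"
    proof (cases "\<omega> \<in> N0")
      case True then show ?thesis by simp
    next
      case False
      have \<omega>s: "\<omega> \<in> space M" using \<omega> by (simp add: TS_def)
      have n_ge: "b \<le> nT \<tau> \<omega>" using \<omega>s False by (simp add: N0_def)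
      define n where "n = nT \<tau> \<omega>"
      define w where "w = ST \<mu> \<tau> \<omega> / n"
      have n3: "n \<ge> 3" using n_ge b by (simp add: n_def)
      have lnln: "ln (ln n) > 0" using L_facts[OF n3] by simp
      have npos': "num_pulls A k (\<tau> \<omega>) \<omega> > 0" using n3 by (simp add: n_def nT_def)
      have sm: "sample_mean A Y k (\<tau> \<omega>) \<omega> - \<mu> = w"
        using sample_mean_Lsum[OF npos', of \<mu>] by (simp add: w_def n_def nT_def ST_def)
      have br: "psi_bregman \<Lambda> \<psi> \<mu> (sample_mean A Y k (\<tau> \<omega>) \<omega>) \<mu> = Phi \<Lambda> \<psi> w"
        using bregman_Phi[of \<mu> "sample_mean A Y k (\<tau> \<omega>) \<omega>"] sm by simp
      have ineq: "ereal (n / ln (ln n)) * Phi \<Lambda> \<psi> w \<ge> ereal (C * \<delta>)"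
        using \<omega> br by (simp add: TS_def n_def nT_def C_def)
      have r: "n / ln (ln n) > 0" using n3 lnln by simp
      have PhiGe: "Phi \<Lambda> \<psi> w \<ge> ereal (C * \<delta> / (n / ln (ln n)))" by (rule ereal_mult_ge[OF r ineq])
      define x where "x = ln (n / b)"
      define j where "j = nat \<lfloor>x\<rfloor>"
      have x0: "x \<ge> 0" using n_ge b by (simp add: x_def n_def)
      have fl: "real j = of_int \<lfloor>x\<rfloor>" using x0 by (simp add: j_def)
      have jle: "real j \<le> x" unfolding fl by (rule of_int_floor_le)
      have jlt: "x < real j + 1" unfolding fl by (rule real_of_int_floor_add_one_gt)
      have nx: "n = b * exp x" using n3 b by (simp add: x_def)
      have Nle: "Nj j \<le> n" unfolding nx Nj_def using jle b by simp
      have Nlt: "n < exp 1 * Nj j"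
      proof -
        have "exp x < exp (real j + 1)" using jlt by simp
        then have "b * exp x < b * exp (real j + 1)" using b by simp
        then show ?thesis unfolding nx Nj_def by (simp add: exp_add algebra_simps)
      qed
      have A1: "ln (ln n) \<ge> ln (L + real j)"
      proof -
        have "ln (Nj j) \<le> ln n" using Nle Njpos[of j] by simp
        then have "L + real j \<le> ln n" using lnNj by simp
        then show ?thesis using L1 by simp
      qed
      have "C > 0" unfolding C_def L_def[symmetric] using pL by simp
      then have Cpos: "C * \<delta> > 0" using \<delta> by simp
      have A2: "C * \<delta> / (n / ln (ln n)) = C * \<delta> * ln (ln n) / n" by simp
      have A3: "C * \<delta> * ln (ln n) / n \<ge> C * \<delta> * ln (L + real j) / n"
        using A1 Cpos n3 by (intro divide_right_mono mult_left_mono) auto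
      have A4: "C * \<delta> * ln (L + real j) / n > C * \<delta> * ln (L + real j) / (exp 1 * Nj j)"
        using Nlt Cpos lnLj[of j] n3 Njpos[of j] by (intro divide_strict_left_mono) auto
      have A5: "C * \<delta> * ln (L + real j) / (exp 1 * Nj j) = 2 * cj j"
      proof -
        have gen: "\<And>e N z y. (e::real) \<noteq> 0 \<Longrightarrow> N \<noteq> 0 \<Longrightarrow>
            4 * e * z * \<delta> * y / (e * N) = 2 * (2 * \<delta> * z * y / N)" by (simp add: field_simps)
        show ?thesis unfolding C_def cj_def q_def L_def[symmetric]
          using gen[of "exp 1" "Nj j" "1 + 1 / ln L" "ln (L + real j)"] Njpos[of j] by simp
      qed
      have key: "C * \<delta> / (n / ln (ln n)) > cj j"
        using A2 A3 A4 A5 cjpos[of j] by linarith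
      have Phigt: "Phi \<Lambda> \<psi> w > ereal (cj j)"
      proof -
        have "ereal (cj j) < ereal (C * \<delta> / (n / ln (ln n)))" using key by simp
        then show ?thesis using PhiGe by (rule less_le_trans)
      qed
      have w0: "w \<noteq> 0" using Phigt Phi_0 cjpos[of j] by auto
      have inE: "Nj j \<le> nT \<tau> \<omega> \<and> Phi \<Lambda> \<psi> (ST \<mu> \<tau> \<omega> / nT \<tau> \<omega>) > ereal (cj j)"
        using Nle Phigt by (simp add: n_def w_def)
      show ?thesis
      proof (cases "w > 0")
        case True
        then have "\<omega> \<in> Kp j" using Kp[of j] inE \<omega>s by (auto simp: w_def n_def)
        then show ?thesis by (auto simp: KK_def)
      next
        case False
        then have "(-1) * w > 0" using w0 by simp
        then have "\<omega> \<in> Km j" using Km[of j] inE \<omega>s by (auto simp: w_def n_def)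
        then show ?thesis by (auto simp: KK_def)
      qed
    qed
  qed
  have sg: "summable g" and sgle: "suminf g \<le> 2 * exp (- (2 * \<delta>))"
    using sum_bound[OF b \<delta>] unfolding g_def q_def L_def by auto
  have sKK: "summable (\<lambda>j. prob (KK j))"
    by (rule summable_comparison_test'[OF summable_mult[OF sg, of 2], of 0]) (simp add: KKle)
  have UM: "(\<Union>j. KK j) \<in> sets M" using KKM by auto
  have "prob (\<Union>j. KK j) \<le> (\<Sum>j. prob (KK j))"
    using KKM sKK by (intro finite_measure_subadditive_countably) auto
  also have "\<dots> \<le> (\<Sum>j. 2 * g j)"
    using KKle sKK summable_mult[OF sg, of 2] by (intro suminf_le) auto
  also have "\<dots> = 2 * suminf g" using suminf_mult[OF sg] by simp
  also have "\<dots> \<le> 4 * exp (- (2 * \<delta>))" using sgle by simp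
  also have "\<dots> \<le> 2 * exp (- \<delta>)"
  proof -
    have "2 \<le> exp \<delta>" using exp_ge_add_one_self[of \<delta>] \<delta> by linarith
    then have "2 * exp (- \<delta>) \<le> 1" by (simp add: exp_minus field_simps)
    moreover have "exp (- (2 * \<delta>)) = exp (- \<delta>) * exp (- \<delta>)" by (simp add: exp_add[symmetric])
    ultimately show ?thesis by (simp add: mult_right_mono)
  qed
  finally have Ule: "prob (\<Union>j. KK j) \<le> 2 * exp (- \<delta>)" .
  have N0n: "N0 \<in> null_sets M" using N0M N0null by (simp add: null_sets_def)
  show ?thesis
  proof (cases "TS \<in> sets M")
    case True
    have "prob TS \<le> prob ((\<Union>j. KK j) \<union> N0)"
      using cover UM N0M by (intro finite_measure_mono) auto
    also have "\<dots> = prob (\<Union>j. KK j)" using measure_Un_null_set[OF UM N0n] .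
    finally show ?thesis using Ule unfolding TS_def by linarith
  next
    case False
    then show ?thesis unfolding TS_def[symmetric] by (simp add: measure_notin_sets)
  qed
qed

end

theorem lemma3:
  fixes M :: "'m measure"
    and F :: "nat \<Rightarrow> 'm measure"
    and K k :: nat
    and P :: "nat \<Rightarrow> real measure"
    and A :: "nat \<Rightarrow> 'm \<Rightarrow> nat"
    and Y :: "nat \<Rightarrow> 'm \<Rightarrow> real"
    and \<tau> :: "'m \<Rightarrow> nat"
    and \<psi> \<psi>' \<psi>'' :: "real \<Rightarrow> real"
    and \<Lambda> :: "real set"
    and b \<delta> :: real
  assumes M: "prob_space M"
    \<comment> \<open>filtration: F t contains the history up to round t (and any internal randomisation)\<close>
    and F_sub: "\<And>t. subalgebra M (F t)"
    and F_mono: "\<And>s t. s \<le> t \<Longrightarrow> sets (F s) \<subseteq> sets (F t)"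
    \<comment> \<open>arms 1..K, each with a probability distribution on the reals\<close>
    and K: "K \<ge> 1" and k: "k \<in> {1..K}"
    and P_prob: "\<And>j. j \<in> {1..K} \<Longrightarrow> prob_space (P j)"
    and P_sets: "\<And>j. j \<in> {1..K} \<Longrightarrow> sets (P j) = sets borel"
    \<comment> \<open>adaptive sampling: A t is chosen based on the past, Y t ~ P (A t) given the past\<close>
    and A_range: "\<And>t \<omega>. t \<ge> 1 \<Longrightarrow> \<omega> \<in> space M \<Longrightarrow> A t \<omega> \<in> {1..K}"
    and A_meas: "\<And>t. t \<ge> 1 \<Longrightarrow> A t \<in> measurable (F (t - 1)) (count_space UNIV)"
    and Y_meas: "\<And>t. t \<ge> 1 \<Longrightarrow> Y t \<in> borel_measurable (F t)"
    and Y_law: "\<And>t B. t \<ge> 1 \<Longrightarrow> B \<in> sets borel \<Longrightarrow>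
        AE \<omega> in M. real_cond_exp M (F (t - 1)) (\<lambda>\<omega>'. indicator B (Y t \<omega>')) \<omega>
                     = measure (P (A t \<omega>)) B"
    \<comment> \<open>\<psi>: nonnegative, C^2, strictly convex on the open interval \<Lambda> \<ni> 0, \<psi>(0) = \<psi>'(0) = 0\<close>
    and \<Lambda>_open: "open \<Lambda>" and \<Lambda>_int: "is_interval \<Lambda>" and \<Lambda>0: "0 \<in> \<Lambda>"
    and \<psi>_d1: "\<And>l. l \<in> \<Lambda> \<Longrightarrow> (\<psi> has_real_derivative \<psi>' l) (at l)"
    and \<psi>_d2: "\<And>l. l \<in> \<Lambda> \<Longrightarrow> (\<psi>' has_real_derivative \<psi>'' l) (at l)"
    and \<psi>_C2: "continuous_on \<Lambda> \<psi>''"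
    and \<psi>_convex: "strictly_convex_on \<Lambda> \<psi>"
    and \<psi>_nonneg: "\<And>l. l \<in> \<Lambda> \<Longrightarrow> \<psi> l \<ge> 0"
    and \<psi>_0: "\<psi> 0 = 0" and \<psi>'_0: "\<psi>' 0 = 0"
    \<comment> \<open>arm k is sub-\<psi> with mean \<mu>_k\<close>
    and mean_int: "integrable (P k) (\<lambda>y. y)"
    and subpsi_int: "\<And>l. l \<in> \<Lambda> \<Longrightarrow>
        integrable (P k) (\<lambda>y. exp (l * (y - (\<integral>z. z \<partial>P k))))"
    and subpsi: "\<And>l. l \<in> \<Lambda> \<Longrightarrow>
        ln (\<integral>y. exp (l * (y - (\<integral>z. z \<partial>P k))) \<partial>P k) \<le> \<psi> l"
    \<comment> \<open>arbitrary random time with at least b pulls of arm k almost surely\<close>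
    and \<tau>_meas: "\<tau> \<in> measurable M (count_space UNIV)"
    and b: "b \<ge> 3"
    and N_ge_b: "AE \<omega> in M. real (num_pulls A k (\<tau> \<omega>) \<omega>) \<ge> b"
    and \<delta>: "\<delta> \<ge> 1"
  shows "measure M {\<omega> \<in> space M.
            ereal (real (num_pulls A k (\<tau> \<omega>) \<omega>) / ln (ln (real (num_pulls A k (\<tau> \<omega>) \<omega>))))
              * psi_bregman \<Lambda> \<psi> (\<integral>z. z \<partial>P k) (sample_mean A Y k (\<tau> \<omega>) \<omega>) (\<integral>z. z \<partial>P k)
            \<ge> ereal (4 * exp 1 * (1 + 1 / ln (ln b)) * \<delta>)}
         \<le> 2 * exp (- \<delta>)"
proof -
  have bd: "bandit M F k P A Y"
    unfolding bandit_def bandit_axioms_def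
    using M F_sub F_mono P_prob[OF k] P_sets[OF k] A_meas Y_meas Y_law by blast
  interpret bandit M F k P A Y by (rule bd)
  have psi: "psi_setup \<Lambda> \<psi>"
    unfolding psi_setup_def using \<Lambda>0 \<Lambda>_open \<Lambda>_int \<psi>_0 \<psi>_nonneg \<psi>_convex by blast
  show ?thesis
    by (rule main[OF psi subpsi_int subpsi \<tau>_meas b N_ge_b \<delta>])
qed

end
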